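(* Let $X$ and $Y$ be topological spaces, $Z$ a metric space, and $f:X\times Y\to Z$ a mapping. Suppose $Y$ has a countable base and that for every $y\in Y$ the mapping $f^y$ is quasicontinuous. Then there is a residual set $R\subset X$ such that for every $(a,b)\in R\times Y$, $f$ is continuous at $(a,b)$ provided $f_a$ is continuous at $b$.
   Context: $f_x(y)=f^y(x)=f(x,y)$. A mapping $g:X\to Z$ is quasicontinuous at $a$ if for each neighborhood $U$ of $a$ and each neighborhood $W$ of $g(a)$ there is an open $O$ with $\emptyset\ne O\subset U$ and $g(O)\subset W$; quasicontinuous means quasicontinuous at every point. Residual means containing a countable intersection of dense open sets. *)

theory Defs
  imports "HOL-Analysis.Analysis"
begin

text \<open>Quasicontinuity at a point (neighbourhoods may be taken open w.l.o.g.).\<close>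
definition quasicontinuous_at :: "('a::topological_space \<Rightarrow> 'b::topological_space) \<Rightarrow> 'a \<Rightarrow> bool" where
  "quasicontinuous_at g a \<longleftrightarrow>
     (\<forall>U W. open U \<longrightarrow> a \<in> U \<longrightarrow> open W \<longrightarrow> g a \<in> W \<longrightarrow>
        (\<exists>V. open V \<and> V \<noteq> {} \<and> V \<subseteq> U \<and> g ` V \<subseteq> W))"

definition quasicontinuous :: "('a::topological_space \<Rightarrow> 'b::topological_space) \<Rightarrow> bool" where
  "quasicontinuous g \<longleftrightarrow> (\<forall>a. quasicontinuous_at g a)"

definition residual :: "'a::topological_space set \<Rightarrow> bool" where
  "residual R \<longleftrightarrow> (\<exists>G :: nat \<Rightarrow> 'a set. (\<forall>n. open (G n) \<and> closure (G n) = UNIV) \<and> (\<Inter>n. G n) \<subseteq> R)"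

end

theory Submission
  imports Defs
begin

lemma residualI:
  fixes R :: "'a::topological_space set"
  assumes "countable \<G>" "\<forall>G\<in>\<G>. open G \<and> closure G = UNIV" "\<Inter>\<G> \<subseteq> R"
  shows "residual R"
proof (cases "\<G> = {}")
  case True
  then show ?thesis using assms unfolding residual_def
    by (intro exI[of _ "\<lambda>n. UNIV"]) auto
next
  case False
  then have r: "range (from_nat_into \<G>) = \<G>" using assms(1) by simp
  show ?thesis unfolding residual_def
  proof (intro exI[of _ "from_nat_into \<G>"] conjI allI)
    fix n show "open (from_nat_into \<G> n)" "closure (from_nat_into \<G> n) = UNIV"
      using assms(2) r by auto
  next
    show "(\<Inter>n. from_nat_into \<G> n) \<subseteq> R" using r assms(3) by simp
  qed
qed

lemma dense_open_aux:
  fixes S :: "'a::topological_space set"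
  assumes "open S"
  shows "open (S \<union> - closure S) \<and> closure (S \<union> - closure S) = UNIV"
proof
  show "open (S \<union> - closure S)" using assms by auto
  have "closure S \<subseteq> closure (S \<union> - closure S)" by (rule closure_mono) blast
  moreover have "- closure S \<subseteq> closure (S \<union> - closure S)"
    using closure_subset[of "S \<union> - closure S"] by blast
  ultimately have "closure S \<union> - closure S \<subseteq> closure (S \<union> - closure S)" by blast
  then show "closure (S \<union> - closure S) = UNIV" by auto
qed

theorem corollary3p5:
  fixes f :: "'a::topological_space \<times> 'b::second_countable_topology \<Rightarrow> 'c::metric_space"
  assumes "\<forall>y. quasicontinuous (\<lambda>x. f (x, y))"
  shows "\<exists>R. residual R \<and>
           (\<forall>a\<in>R. \<forall>b. ((\<lambda>y. f (a, y)) \<longlongrightarrow> f (a, b)) (at b) \<longrightarrow> (f \<longlongrightarrow> f (a, b)) (at (a, b)))"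
proof -
  have qc: "\<And>y x U W. open U \<Longrightarrow> x \<in> U \<Longrightarrow> open W \<Longrightarrow> f (x, y) \<in> W \<Longrightarrow>
        \<exists>V. open V \<and> V \<noteq> {} \<and> V \<subseteq> U \<and> (\<lambda>x. f (x, y)) ` V \<subseteq> W"
    using assms unfolding quasicontinuous_def quasicontinuous_at_def by blast
  obtain \<B> :: "'b set set" where cB: "countable \<B>" and bB: "topological_basis \<B>"
    using ex_countable_basis by blast
  define yy where "yy B = (SOME y. y \<in> B)" for B :: "'b set"
  define t where "t n = inverse (real (Suc n))" for n
  have tpos: "t n > 0" for n unfolding t_def by simp
  define E1 where "E1 B n = {x. \<exists>U. open U \<and> x \<in> U \<and>
       (\<forall>u\<in>U. \<forall>v\<in>U. dist (f (u, yy B)) (f (v, yy B)) < t n)}" for B n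
  define P where "P B n = {x. \<exists>y\<in>B. dist (f (x, y)) (f (x, yy B)) > t n}" for B n
  define G1 where "G1 B n = E1 B n \<union> - closure (E1 B n)" for B n
  define G2 where "G2 B n = interior (P B n) \<union> - closure (interior (P B n))" for B n
  have E1open: "open (E1 B n)" for B n
    unfolding open_subopen[of "E1 B n"]
  proof (intro ballI)
    fix x assume "x \<in> E1 B n"
    then obtain U where U: "open U" "x \<in> U" "\<forall>u\<in>U. \<forall>v\<in>U. dist (f (u, yy B)) (f (v, yy B)) < t n"
      unfolding E1_def by blast
    then have "U \<subseteq> E1 B n" unfolding E1_def by blast
    then show "\<exists>T. open T \<and> x \<in> T \<and> T \<subseteq> E1 B n" using U by blast
  qed
  define \<G> where "\<G> = (\<lambda>(B,n). G1 B n) ` (\<B> \<times> UNIV) \<union> (\<lambda>(B,n). G2 B n) ` (\<B> \<times> UNIV)"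
  have "countable \<G>" unfolding \<G>_def using cB by auto
  moreover have "\<forall>G\<in>\<G>. open G \<and> closure G = UNIV"
    unfolding \<G>_def G1_def G2_def using dense_open_aux E1open by auto
  ultimately have res: "residual (\<Inter>\<G>)" by (rule residualI) simp
  show ?thesis
  proof (intro exI[of _ "\<Inter>\<G>"] conjI res ballI allI impI)
    fix a b assume aR: "a \<in> \<Inter>\<G>" and cont: "((\<lambda>y. f (a, y)) \<longlongrightarrow> f (a, b)) (at b)"
    show "(f \<longlongrightarrow> f (a, b)) (at (a, b))"
    proof (rule tendstoI)
      fix e :: real assume "e > 0"
      then obtain n where n: "inverse (real (Suc n)) < e / 4"
        using reals_Archimedean[of "e/4"] by auto
      have tn: "4 * t n < e" using n unfolding t_def by simp
      have "t n / 2 > 0" using tpos by simp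
      from tendstoD[OF cont this] obtain T where T: "open T" "b \<in> T"
        "\<forall>y\<in>T. y \<noteq> b \<longrightarrow> dist (f (a, y)) (f (a, b)) < t n / 2"
        unfolding eventually_at_topological by auto
      obtain B where B: "B \<in> \<B>" "b \<in> B" "B \<subseteq> T" using topological_basisE[OF bB T(1,2)] by blast
      have Bopen: "open B" using topological_basis_open[OF bB B(1)] .
      have near: "\<forall>y\<in>B. dist (f (a, y)) (f (a, b)) < t n / 2"
        using T(3) B(3) tpos[of n] by (metis dist_self half_gt_zero subsetD)
      have yB: "yy B \<in> B" unfolding yy_def using B(2) by (metis someI)
      have aG1: "a \<in> G1 B n" and aG2: "a \<in> G2 B n" using aR B(1) unfolding \<G>_def by auto
      have aE1: "a \<in> E1 B n"
      proof (rule ccontr)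
        assume na: "a \<notin> E1 B n"
        then have "a \<in> - closure (E1 B n)" using aG1 unfolding G1_def by auto
        from qc[OF _ this _, of "ball (f (a, yy B)) (t n / 2)" "yy B"]
        obtain V where V: "open V" "V \<noteq> {}" "V \<subseteq> - closure (E1 B n)"
          "(\<lambda>x. f (x, yy B)) ` V \<subseteq> ball (f (a, yy B)) (t n / 2)"
          using tpos[of n] by auto
        have "V \<subseteq> E1 B n"
        proof
          fix v assume "v \<in> V"
          have "\<forall>u\<in>V. \<forall>w\<in>V. dist (f (u, yy B)) (f (w, yy B)) < t n"
          proof (intro ballI)
            fix u w assume "u \<in> V" "w \<in> V"
            then have "dist (f (a, yy B)) (f (u, yy B)) < t n / 2"
                 "dist (f (a, yy B)) (f (w, yy B)) < t n / 2" using V(4) by auto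
            then show "dist (f (u, yy B)) (f (w, yy B)) < t n"
              by (rule dist_triangle_half_r)
          qed
          then show "v \<in> E1 B n" unfolding E1_def using V(1) \<open>v \<in> V\<close> by blast
        qed
        then show False using V(2,3) closure_subset by blast
      qed
      then obtain U1 where U1: "open U1" "a \<in> U1"
        "\<forall>u\<in>U1. \<forall>v\<in>U1. dist (f (u, yy B)) (f (v, yy B)) < t n"
        unfolding E1_def by blast
      have "a \<notin> P B n"
      proof
        assume "a \<in> P B n"
        then obtain y where "y \<in> B" "dist (f (a, y)) (f (a, yy B)) > t n" unfolding P_def by blast
        moreover have "dist (f (a, y)) (f (a, b)) < t n / 2" "dist (f (a, yy B)) (f (a, b)) < t n / 2"
          using near yB \<open>y \<in> B\<close> by auto
        ultimately show False using dist_triangle_half_l[of "f (a, y)" "f (a, b)" "t n" "f (a, yy B)"] by linarith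
      qed
      then have aU2: "a \<in> - closure (interior (P B n))" using aG2 interior_subset
        unfolding G2_def by blast
      define U2 where "U2 = - closure (interior (P B n))"
      have U2open: "open U2" unfolding U2_def by auto
      have "\<forall>z\<in>(U1 \<inter> U2) \<times> B. dist (f z) (f (a, b)) < e"
      proof
        fix z assume "z \<in> (U1 \<inter> U2) \<times> B"
        then obtain x y where z: "z = (x, y)" "x \<in> U1" "x \<in> U2" "y \<in> B" by auto
        show "dist (f z) (f (a, b)) < e"
        proof (rule ccontr)
          assume "\<not> dist (f z) (f (a, b)) < e"
          then have big: "dist (f (x, y)) (f (a, b)) \<ge> 4 * t n" using tn z(1) by auto
          from qc[of "U1 \<inter> U2" x "ball (f (x, y)) (t n)" y] U1 U2open z tpos[of n]
          obtain V where V: "open V" "V \<noteq> {}" "V \<subseteq> U1 \<inter> U2"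
            "(\<lambda>x. f (x, y)) ` V \<subseteq> ball (f (x, y)) (t n)" by auto
          have "V \<subseteq> P B n"
          proof
            fix v assume "v \<in> V"
            then have d1: "dist (f (x, y)) (f (v, y)) < t n" using V(4) by auto
            have d2: "dist (f (v, yy B)) (f (a, yy B)) < t n" using U1(3) V(3) \<open>v \<in> V\<close> U1(2) by auto
            have d3: "dist (f (a, yy B)) (f (a, b)) < t n / 2" using near yB by auto
            have "dist (f (v, y)) (f (v, yy B)) > t n"
              using big d1 d2 d3 dist_triangle[of "f (x, y)" "f (a, b)" "f (v, y)"]
                dist_triangle[of "f (v, y)" "f (a, b)" "f (v, yy B)"]
                dist_triangle[of "f (v, yy B)" "f (a, b)" "f (a, yy B)"]
                dist_commute[of "f (x, y)" "f (v, y)"] dist_commute[of "f (v, yy B)" "f (a, yy B)"] using tpos[of n] by linarith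
            then show "v \<in> P B n" unfolding P_def using z(4) by blast
          qed
          then have "V \<subseteq> interior (P B n)" using V(1) interior_maximal by blast
          then show False using V(2,3) closure_subset unfolding U2_def by blast
        qed
      qed
      moreover have "open ((U1 \<inter> U2) \<times> B)" using U1(1) U2open Bopen by (auto intro: open_Times)
      moreover have "(a, b) \<in> (U1 \<inter> U2) \<times> B" using U1(2) aU2 B(2) unfolding U2_def by auto
      ultimately show "\<forall>\<^sub>F z in at (a, b). dist (f z) (f (a, b)) < e"
        unfolding eventually_at_topological by blast
    qed
  qed
qed

end
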